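(* Let $E$ be a finite set and $\P$ a poset on $E$. Suppose $\mathcal{B}$ is the set of bases of some U-matroid with characteristic poset $\P$. Then $\mathcal{B}^*=\{E\setminus B: B\in\mathcal{B}\}$ is the set of bases of a U-matroid with characteristic poset $\P^*$ (the dual poset of $\P$, obtained by reversing all relations).
   Context: A U-matroid is a triple $(E,\mathcal{D},\rho)$ with $\mathcal{D}\subseteq2^E$ an accessible distributive lattice (containing $\emptyset,E$, closed under $\cup,\cap$, each nonempty $A\in\mathcal{D}$ has some $x$ with $A\setminus\{x\}\in\mathcal{D}$) and $\rho:\mathcal{D}\to\mathbb{N}$ satisfying $\rho(\emptyset)=0$; $\rho(A)\le\rho(B)$ for $A\subseteq B$; $\rho(A)+\rho(B)\ge\rho(A\cup B)+\rho(A\cap B)$; and $\rho(A\cup\{e\})-\rho(A)\le1$ whenever $A,A\cup\{e\}\in\mathcal{D}$. Its characteristic poset is the poset on $E$ with $i\le j$ iff every element of $\mathcal{D}$ containing $j$ also contains $i$ (so $\mathcal{D}$ is the lattice of order ideals of this poset). Its bases are the supports of the vertices of the base polyhedron $\{\mathbf{x}\in\mathbb{R}^E:\sum_{a\in A}x_a\le\rho(A)\ \forall A\in\mathcal{D},\ \sum_{e\in E}x_e=\rho(E)\}$. *)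

theory Defs
  imports Complex_Main
begin

definition accessible_distrib_lattice :: "'a set \<Rightarrow> 'a set set \<Rightarrow> bool" where
  "accessible_distrib_lattice E D \<longleftrightarrow>
     D \<subseteq> Pow E \<and> {} \<in> D \<and> E \<in> D \<and>
     (\<forall>A\<in>D. \<forall>B\<in>D. A \<union> B \<in> D \<and> A \<inter> B \<in> D) \<and>
     (\<forall>A\<in>D. A \<noteq> {} \<longrightarrow> (\<exists>x\<in>A. A - {x} \<in> D))"

text \<open>U-matroid (E, D, rho); rho only matters on D.\<close>
definition umatroid :: "'a set \<Rightarrow> 'a set set \<Rightarrow> ('a set \<Rightarrow> nat) \<Rightarrow> bool" where
  "umatroid E D \<rho> \<longleftrightarrow>
     accessible_distrib_lattice E D \<and>
     \<rho> {} = 0 \<and>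
     (\<forall>A\<in>D. \<forall>B\<in>D. A \<subseteq> B \<longrightarrow> \<rho> A \<le> \<rho> B) \<and>
     (\<forall>A\<in>D. \<forall>B\<in>D. \<rho> A + \<rho> B \<ge> \<rho> (A \<union> B) + \<rho> (A \<inter> B)) \<and>
     (\<forall>A\<in>D. \<forall>e. A \<union> {e} \<in> D \<longrightarrow> \<rho> (A \<union> {e}) \<le> \<rho> A + 1)"

text \<open>Characteristic poset: (i,j) in the relation means i \<le> j.\<close>
definition char_poset :: "'a set \<Rightarrow> 'a set set \<Rightarrow> ('a \<times> 'a) set" where
  "char_poset E D = {(i, j). i \<in> E \<and> j \<in> E \<and> (\<forall>A\<in>D. j \<in> A \<longrightarrow> i \<in> A)}"

definition base_polyhedron :: "'a set \<Rightarrow> 'a set set \<Rightarrow> ('a set \<Rightarrow> nat) \<Rightarrow> ('a \<Rightarrow> real) set" where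
  "base_polyhedron E D \<rho> =
     {x. (\<forall>e. e \<notin> E \<longrightarrow> x e = 0) \<and>
         (\<forall>A\<in>D. (\<Sum>a\<in>A. x a) \<le> real (\<rho> A)) \<and>
         (\<Sum>e\<in>E. x e) = real (\<rho> E)}"

definition vertex_of :: "('a \<Rightarrow> real) \<Rightarrow> ('a \<Rightarrow> real) set \<Rightarrow> bool" where
  "vertex_of x P \<longleftrightarrow> x \<in> P \<and>
     (\<forall>a\<in>P. \<forall>b\<in>P. \<forall>u::real. 0 < u \<and> u < 1 \<and> x = (\<lambda>e. u * a e + (1 - u) * b e) \<longrightarrow> a = b)"

definition umatroid_bases :: "'a set \<Rightarrow> 'a set set \<Rightarrow> ('a set \<Rightarrow> nat) \<Rightarrow> 'a set set" where
  "umatroid_bases E D \<rho> =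
     {{e \<in> E. x e \<noteq> 0} | x. vertex_of x (base_polyhedron E D \<rho>)}"

end

theory Submission
  imports Defs
begin

lemma umD:
  assumes "umatroid E D \<rho>"
  shows um_acc: "accessible_distrib_lattice E D"
    and um_r0: "\<rho> {} = 0"
    and um_mono: "A \<in> D \<Longrightarrow> B \<in> D \<Longrightarrow> A \<subseteq> B \<Longrightarrow> \<rho> A \<le> \<rho> B"
    and um_sub: "A \<in> D \<Longrightarrow> B \<in> D \<Longrightarrow> \<rho> (A \<union> B) + \<rho> (A \<inter> B) \<le> \<rho> A + \<rho> B"
    and um_unit: "A \<in> D \<Longrightarrow> A \<union> {e} \<in> D \<Longrightarrow> \<rho> (A \<union> {e}) \<le> \<rho> A + 1"
  using assms unfolding umatroid_def by auto

lemma adlD: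
  assumes "accessible_distrib_lattice E D"
  shows adl_sub: "A \<in> D \<Longrightarrow> A \<subseteq> E"
    and adl_empty: "{} \<in> D"
    and adl_E: "E \<in> D"
    and adl_Un: "A \<in> D \<Longrightarrow> B \<in> D \<Longrightarrow> A \<union> B \<in> D"
    and adl_Int: "A \<in> D \<Longrightarrow> B \<in> D \<Longrightarrow> A \<inter> B \<in> D"
    and adl_acc: "A \<in> D \<Longrightarrow> A \<noteq> {} \<Longrightarrow> \<exists>x\<in>A. A - {x} \<in> D"
  using assms unfolding accessible_distrib_lattice_def by auto

lemma bpD:
  assumes "x \<in> base_polyhedron E D \<rho>"
  shows bp_out: "g \<notin> E \<Longrightarrow> x g = 0"
    and bp_le: "A \<in> D \<Longrightarrow> sum x A \<le> real (\<rho> A)"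
    and bp_E: "sum x E = real (\<rho> E)"
  using assms unfolding base_polyhedron_def by auto

lemma bpI:
  assumes "\<And>g. g \<notin> E \<Longrightarrow> x g = 0" "\<And>A. A \<in> D \<Longrightarrow> sum x A \<le> real (\<rho> A)"
    "sum x E = real (\<rho> E)"
  shows "x \<in> base_polyhedron E D \<rho>"
  using assms unfolding base_polyhedron_def by auto

lemma vertexD:
  assumes "vertex_of x P"
  shows vertex_in: "x \<in> P"
    and vertex_ext: "a \<in> P \<Longrightarrow> b \<in> P \<Longrightarrow> 0 < u \<Longrightarrow> u < 1 \<Longrightarrow> x = (\<lambda>e. u * a e + (1 - u) * b e) \<Longrightarrow> a = b"
  using assms unfolding vertex_of_def by blast+

lemma vertexI:
  assumes "x \<in> P" "\<And>a b u. a \<in> P \<Longrightarrow> b \<in> P \<Longrightarrow> 0 < u \<Longrightarrow> u < 1 \<Longrightarrow> x = (\<lambda>e. u * a e + (1 - u) * b e) \<Longrightarrow> a = b"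
  shows "vertex_of x P"
  using assms unfolding vertex_of_def by blast

lemma um_D_sub: "umatroid E D \<rho> \<Longrightarrow> A \<in> D \<Longrightarrow> A \<subseteq> E"
  using adl_sub um_acc by blast

lemma um_finite_D: "umatroid E D \<rho> \<Longrightarrow> finite E \<Longrightarrow> finite D"
  by (meson Pow_iff finite_Pow_iff finite_subset subsetI um_D_sub)

lemma um_augment:
  assumes um: "umatroid E D \<rho>" and fin: "finite E" and A: "A \<in> D"
  shows "C \<in> D \<Longrightarrow> \<not> C \<subseteq> A \<Longrightarrow> \<exists>x\<in>C-A. A \<union> {x} \<in> D"
proof (induction "card C" arbitrary: C rule: less_induct)
  case less
  have acc: "accessible_distrib_lattice E D" using um_acc[OF um] .
  have "C \<noteq> {}" using less.prems by blast
  then obtain y where y: "y \<in> C" "C - {y} \<in> D"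
    using adl_acc[OF acc less.prems(1)] by blast
  have finC: "finite C" using um_D_sub[OF um less.prems(1)] fin finite_subset by blast
  show ?case
  proof (cases "C - {y} \<subseteq> A")
    case True
    then have "y \<notin> A" using less.prems y by blast
    moreover have "A \<union> C = A \<union> {y}" using True y by blast
    moreover have "A \<union> C \<in> D" using adl_Un[OF acc A less.prems(1)] .
    ultimately show ?thesis using y by auto
  next
    case False
    have "card (C - {y}) < card C" using finC y by (meson card_Diff1_less)
    from less.hyps[OF this y(2) False] show ?thesis by blast
  qed
qed

lemma um_rank_bound:
  assumes um: "umatroid E D \<rho>" and fin: "finite E"
  shows "A \<in> D \<Longrightarrow> B \<in> D \<Longrightarrow> A \<subseteq> B \<Longrightarrow> \<rho> B \<le> \<rho> A + card (B - A)"
proof (induction "card (B - A)" arbitrary: A rule: less_induct)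
  case less
  show ?case
  proof (cases "B \<subseteq> A")
    case True
    then have "A = B" using less.prems by blast
    then show ?thesis by simp
  next
    case False
    obtain x where x: "x \<in> B - A" "A \<union> {x} \<in> D"
      using um_augment[OF um fin less.prems(1) less.prems(2) False] by blast
    have finB: "finite B" using um_D_sub[OF um less.prems(2)] fin finite_subset by blast
    have eq: "B - (A \<union> {x}) = (B - A) - {x}" by blast
    have lt: "card (B - (A \<union> {x})) < card (B - A)"
      unfolding eq using finB x(1) by (meson card_Diff1_less finite_Diff)
    have cd: "card (B - A) = Suc (card (B - (A \<union> {x})))"
      unfolding eq using card.remove[of "B - A" x] finB x(1) by blast
    have "\<rho> B \<le> \<rho> (A \<union> {x}) + card (B - (A \<union> {x}))"
      using less.hyps[OF lt x(2) less.prems(2)] x(1) less.prems(3) by blast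
    moreover have "\<rho> (A \<union> {x}) \<le> \<rho> A + 1"
      using um_unit[OF um less.prems(1) x(2)] .
    ultimately show ?thesis using cd by simp
  qed
qed


lemma um_tight_closed:
  assumes um: "umatroid E D \<rho>" and fin: "finite E"
    and x: "x \<in> base_polyhedron E D \<rho>"
    and A: "A \<in> D" "sum x A = real (\<rho> A)" and B: "B \<in> D" "sum x B = real (\<rho> B)"
  shows "A \<union> B \<in> D \<and> sum x (A \<union> B) = real (\<rho> (A \<union> B)) \<and>
         A \<inter> B \<in> D \<and> sum x (A \<inter> B) = real (\<rho> (A \<inter> B))"
proof -
  have acc: "accessible_distrib_lattice E D" using um_acc[OF um] .
  have UD: "A \<union> B \<in> D" and ID: "A \<inter> B \<in> D"
    using adl_Un[OF acc A(1) B(1)] adl_Int[OF acc A(1) B(1)] by blast+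
  have fA: "finite A" and fB: "finite B"
    using um_D_sub[OF um A(1)] um_D_sub[OF um B(1)] fin finite_subset by blast+
  have su: "sum x (A \<union> B) = sum x A + sum x B - sum x (A \<inter> B)"
    using sum_Un[OF fA fB] .
  have sm: "\<rho> A + \<rho> B \<ge> \<rho> (A \<union> B) + \<rho> (A \<inter> B)"
    using um_sub[OF um A(1) B(1)] by linarith
  then have smr: "real (\<rho> A) + real (\<rho> B) \<ge> real (\<rho> (A \<union> B)) + real (\<rho> (A \<inter> B))"
    by (metis of_nat_add of_nat_le_iff)
  have le1: "sum x (A \<union> B) \<le> real (\<rho> (A \<union> B))"
    using bp_le[OF x UD] .
  have le2: "sum x (A \<inter> B) \<le> real (\<rho> (A \<inter> B))"
    using bp_le[OF x ID] .
  show ?thesis using UD ID su smr le1 le2 A(2) B(2) by linarith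
qed

lemma um_vertex_01:
  assumes um: "umatroid E D \<rho>" and fin: "finite E"
    and vx: "vertex_of x (base_polyhedron E D \<rho>)" and e: "e \<in> E"
  shows "x e = 0 \<or> x e = 1"
proof -
  define P where "P = base_polyhedron E D \<rho>"
  have xP: "x \<in> P" using vertex_in[OF vx] unfolding P_def .
  have acc: "accessible_distrib_lattice E D" using um_acc[OF um] .
  have ED: "E \<in> D" and eD: "{} \<in> D" using adl_E[OF acc] adl_empty[OF acc] by blast+
  have r0: "\<rho> {} = 0" using um_r0[OF um] .
  have xout: "\<And>g. g \<notin> E \<Longrightarrow> x g = 0" using bp_out[OF xP[unfolded P_def]] .
  have xle: "\<And>A. A \<in> D \<Longrightarrow> sum x A \<le> real (\<rho> A)" using bp_le[OF xP[unfolded P_def]] .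
  have xE: "sum x E = real (\<rho> E)" using bp_E[OF xP[unfolded P_def]] .
  define T where "T = {A \<in> D. sum x A = real (\<rho> A)}"
  have ET: "E \<in> T" using ED xE unfolding T_def by blast
  have eT: "{} \<in> T" using eD r0 unfolding T_def by simp
  have TU: "A \<union> B \<in> T" and TI: "A \<inter> B \<in> T" if "A \<in> T" "B \<in> T" for A B
    using um_tight_closed[OF um fin xP[unfolded P_def], of A B] that unfolding T_def by blast+
  have Tsub: "A \<subseteq> E" if "A \<in> T" for A using um_D_sub[OF um] that unfolding T_def by blast
  have Tfin: "finite A" if "A \<in> T" for A using Tsub[OF that] fin finite_subset by blast
  obtain M where M: "M \<in> T \<and> e \<in> M" and Mmin: "\<forall>A. A \<in> T \<and> e \<in> A \<longrightarrow> card M \<le> card A"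
    using ex_has_least_nat[of "\<lambda>A. A \<in> T \<and> e \<in> A" E card] ET e by blast
  have Mleast: "M \<subseteq> A" if "A \<in> T" "e \<in> A" for A
  proof -
    have "A \<inter> M \<in> T" using TI that(1) M by blast
    then have "card M \<le> card (A \<inter> M)" using Mmin that M by blast
    moreover have "finite M" using Tfin M by blast
    ultimately have "A \<inter> M = M" by (meson Int_lower2 card_seteq)
    then show ?thesis by blast
  qed
  obtain N where N: "N \<in> T \<and> N \<subseteq> M \<and> e \<notin> N"
    and Nmax: "\<forall>A. A \<in> T \<and> A \<subseteq> M \<and> e \<notin> A \<longrightarrow> card E - card N \<le> card E - card A"
    using ex_has_least_nat[of "\<lambda>A. A \<in> T \<and> A \<subseteq> M \<and> e \<notin> A" "{}" "\<lambda>A. card E - card A"] eT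
    by blast
  have Ngreat: "A \<subseteq> N" if "A \<in> T" "A \<subseteq> M" "e \<notin> A" for A
  proof -
    have AN: "A \<union> N \<in> T" using TU that(1) N by blast
    then have "card E - card N \<le> card E - card (A \<union> N)" using Nmax that N by blast
    moreover have "card (A \<union> N) \<le> card E" using Tsub[OF AN] fin card_mono by blast
    ultimately have "card (A \<union> N) \<le> card N" by linarith
    moreover have "finite (A \<union> N)" using Tfin AN by blast
    ultimately have "N = A \<union> N" by (meson Un_upper2 card_seteq)
    then show ?thesis by blast
  qed
  show ?thesis
  proof (cases "M - N = {e}")
    case True
    then have MN: "M = insert e N" using N M by blast
    have fN: "finite N" using Tfin N by blast
    have "sum x M = x e + sum x N" using MN fN N by simp
    then have xe: "x e = real (\<rho> M) - real (\<rho> N)" using M N unfolding T_def by simp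
    have ND: "N \<in> D" and MD: "M \<in> D" using N M unfolding T_def by blast+
    have "\<rho> N \<le> \<rho> M" using um_mono[OF um ND MD] N by blast
    moreover have "\<rho> M \<le> \<rho> N + 1"
      using um_unit[OF um ND, of e] MD MN by simp
    ultimately have "\<rho> M = \<rho> N \<or> \<rho> M = \<rho> N + 1" by linarith
    then show ?thesis using xe by auto
  next
    case False
    have "e \<in> M - N" using M N by blast
    then obtain f where f: "f \<in> M" "f \<notin> N" "f \<noteq> e" using False by blast
    have fE: "f \<in> E" using Tsub M f by blast
    have ef: "e \<in> A \<longleftrightarrow> f \<in> A" if "A \<in> T" for A
    proof
      assume "e \<in> A" then show "f \<in> A" using Mleast that f by blast
    next
      assume fA: "f \<in> A"
      show "e \<in> A"
      proof (rule ccontr)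
        assume "e \<notin> A"
        then have "A \<inter> M \<subseteq> N" using Ngreat[of "A \<inter> M"] TI that M by blast
        then show False using fA f by blast
      qed
    qed
    define S where "S = {real (\<rho> A) - sum x A | A. A \<in> D \<and> sum x A < real (\<rho> A)}"
    have finS: "finite S"
    proof -
      have "S \<subseteq> (\<lambda>A. real (\<rho> A) - sum x A) ` D" unfolding S_def by blast
      then show ?thesis using um_finite_D[OF um fin] finite_subset by blast
    qed
    define \<epsilon> where "\<epsilon> = (if S = {} then 1 else Min S)"
    have Spos: "\<forall>s\<in>S. 0 < s" unfolding S_def by auto
    have epos: "\<epsilon> > 0" unfolding \<epsilon>_def using Spos finS by auto
    have ele: "\<epsilon> \<le> real (\<rho> A) - sum x A" if "A \<in> D" "sum x A < real (\<rho> A)" for A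
    proof -
      have "real (\<rho> A) - sum x A \<in> S" unfolding S_def using that by blast
      then show ?thesis unfolding \<epsilon>_def using finS by auto
    qed
    define d where "d = (\<lambda>g. (if g = e then \<epsilon> else 0) - (if g = f then \<epsilon> else 0))"
    have dsum: "sum d A = (if e \<in> A then \<epsilon> else 0) - (if f \<in> A then \<epsilon> else 0)" if "finite A" for A
      unfolding d_def using that by (simp add: sum_subtractf)
    have dout: "d g = 0" if "g \<notin> E" for g unfolding d_def using that e fE by auto
    have inP: "(\<lambda>g. x g + s * d g) \<in> P" if s: "s = 1 \<or> s = -1" for s
    proof -
      have c1: "\<forall>g. g \<notin> E \<longrightarrow> x g + s * d g = 0" using xout dout by simp
      have c2: "sum (\<lambda>g. x g + s * d g) A \<le> real (\<rho> A)" if A: "A \<in> D" for A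
      proof -
        have fA: "finite A" using um_D_sub[OF um A] fin finite_subset by blast
        have eq: "sum (\<lambda>g. x g + s * d g) A = sum x A + s * sum d A"
          by (simp add: sum.distrib sum_distrib_left)
        show ?thesis
        proof (cases "sum x A = real (\<rho> A)")
          case True
          then have "A \<in> T" unfolding T_def using A by blast
          then have "sum d A = 0" using ef dsum fA by auto
          then show ?thesis using eq True by simp
        next
          case False
          then have lt: "sum x A < real (\<rho> A)" using xle A by fastforce
          have "\<bar>sum d A\<bar> \<le> \<epsilon>" using dsum[OF fA] epos by auto
          then have "s * sum d A \<le> \<epsilon>" using s by auto
          then show ?thesis using eq ele[OF A lt] by linarith
        qed
      qed
      have c3: "sum (\<lambda>g. x g + s * d g) E = real (\<rho> E)"
      proof -
        have "sum d E = 0" using dsum fin e fE by simp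
        then show ?thesis using xE by (simp add: sum.distrib sum_distrib_left[symmetric])
      qed
      show ?thesis unfolding P_def using bpI[of E "\<lambda>g. x g + s * d g" D \<rho>] c1 c2 c3 by blast
    qed
    define y where "y = (\<lambda>g. x g + 1 * d g)"
    define z where "z = (\<lambda>g. x g + (-1) * d g)"
    have yP: "y \<in> P" unfolding y_def using inP by blast
    have zP: "z \<in> P" unfolding z_def using inP by blast
    have xc: "x = (\<lambda>g. (1/2) * y g + (1 - 1/2) * z g)" unfolding y_def z_def by (simp add: fun_eq_iff field_simps)
    have "y = z" using vertex_ext[OF vx yP[unfolded P_def] zP[unfolded P_def], of "1/2"] xc by simp
    then have "y e = z e" by simp
    moreover have "d e = \<epsilon>" unfolding d_def using f by simp
    ultimately show ?thesis using epos unfolding y_def z_def by simp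
  qed
qed

lemma um_rank_E:
  assumes um: "umatroid E D \<rho>" and fin: "finite E" and A: "A \<in> D"
  shows "\<rho> E \<le> \<rho> A + card (E - A)"
  using um_rank_bound[OF um fin A adl_E[OF um_acc[OF um]] um_D_sub[OF um A]] .

lemma dual_umatroid:
  assumes um: "umatroid E D \<rho>" and fin: "finite E"
  shows "umatroid E ((\<lambda>A. E - A) ` D) (\<lambda>X. card X + \<rho> (E - X) - \<rho> E)"
proof -
  define D' where "D' = (\<lambda>A. E - A) ` D"
  define \<rho>' where "\<rho>' = (\<lambda>X. card X + \<rho> (E - X) - \<rho> E)"
  have acc: "accessible_distrib_lattice E D" using um_acc[OF um] .
  have sub: "\<And>A. A \<in> D \<Longrightarrow> A \<subseteq> E" using um_D_sub[OF um] .
  have AE: "\<And>A. A \<in> D \<Longrightarrow> E - (E - A) = A" using sub by blast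
  have rE: "\<And>A. A \<in> D \<Longrightarrow> \<rho> E \<le> \<rho> A + card (E - A)" using um_rank_E[OF um fin] .
  have r': "\<And>A. A \<in> D \<Longrightarrow> \<rho>' (E - A) = card (E - A) + \<rho> A - \<rho> E"
    unfolding \<rho>'_def using AE by simp
  have D'E: "\<And>X. X \<in> D' \<Longrightarrow> \<exists>A\<in>D. X = E - A" unfolding D'_def by blast
  have D'I: "\<And>A. A \<in> D \<Longrightarrow> E - A \<in> D'" unfolding D'_def by blast
  have ED: "E \<in> D" and eD: "{} \<in> D" using adl_E[OF acc] adl_empty[OF acc] by blast+
  have acc': "accessible_distrib_lattice E D'"
    unfolding accessible_distrib_lattice_def
  proof (intro conjI ballI impI)
    show "D' \<subseteq> Pow E" unfolding D'_def by blast
    show "{} \<in> D'" using D'I[OF ED] by simp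
    show "E \<in> D'" using D'I[OF eD] by simp
  next
    fix X Y assume X: "X \<in> D'" and Y: "Y \<in> D'"
    obtain A B where A: "A \<in> D" "X = E - A" and B: "B \<in> D" "Y = E - B" using D'E X Y by blast
    have "X \<union> Y = E - (A \<inter> B)" using A B by blast
    then show "X \<union> Y \<in> D'" using D'I[OF adl_Int[OF acc A(1) B(1)]] by simp
  next
    fix X Y assume X: "X \<in> D'" and Y: "Y \<in> D'"
    obtain A B where A: "A \<in> D" "X = E - A" and B: "B \<in> D" "Y = E - B" using D'E X Y by blast
    have "X \<inter> Y = E - (A \<union> B)" using A B by blast
    then show "X \<inter> Y \<in> D'" using D'I[OF adl_Un[OF acc A(1) B(1)]] by simp
  next
    fix X assume X: "X \<in> D'" "X \<noteq> {}"
    obtain A where A: "A \<in> D" "X = E - A" using D'E X by blast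
    have "\<not> E \<subseteq> A" using A(2) X(2) by blast
    then obtain x where x: "x \<in> E - A" "A \<union> {x} \<in> D" using um_augment[OF um fin A(1) ED] by blast
    have "X - {x} = E - (A \<union> {x})" using A(2) by blast
    then have "X - {x} \<in> D'" using D'I[OF x(2)] by simp
    moreover have "x \<in> X" using x(1) A(2) by blast
    ultimately show "\<exists>x\<in>X. X - {x} \<in> D'" by blast
  qed
  have r0: "\<rho>' {} = 0" unfolding \<rho>'_def by simp
  have mono: "\<rho>' X \<le> \<rho>' Y" if X: "X \<in> D'" and Y: "Y \<in> D'" and XY: "X \<subseteq> Y" for X Y
  proof -
    obtain A B where A: "A \<in> D" "X = E - A" and B: "B \<in> D" "Y = E - B" using D'E X Y by blast
    have BA: "B \<subseteq> A" using XY A(2) B(2) sub[OF A(1)] sub[OF B(1)] by blast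
    have c: "card (E - B) = card (E - A) + card (A - B)"
    proof -
      have "E - B = (E - A) \<union> (A - B)" using BA sub[OF A(1)] by blast
      moreover have "(E - A) \<inter> (A - B) = {}" by blast
      ultimately show ?thesis using fin sub[OF A(1)] by (simp add: card_Un_disjoint finite_subset)
    qed
    have "\<rho> A \<le> \<rho> B + card (A - B)" using um_rank_bound[OF um fin B(1) A(1) BA] .
    moreover have "\<rho>' X = card (E - A) + \<rho> A - \<rho> E" using r'[OF A(1)] A(2) by simp
    moreover have "\<rho>' Y = card (E - B) + \<rho> B - \<rho> E" using r'[OF B(1)] B(2) by simp
    ultimately show ?thesis using c rE[OF A(1)] rE[OF B(1)] by arith
  qed
  have submod: "\<rho>' (X \<union> Y) + \<rho>' (X \<inter> Y) \<le> \<rho>' X + \<rho>' Y" if X: "X \<in> D'" and Y: "Y \<in> D'" for X Y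
  proof -
    obtain A B where A: "A \<in> D" "X = E - A" and B: "B \<in> D" "Y = E - B" using D'E X Y by blast
    have U: "X \<union> Y = E - (A \<inter> B)" and I: "X \<inter> Y = E - (A \<union> B)" using A B by blast+
    have UD: "A \<union> B \<in> D" and ID: "A \<inter> B \<in> D" using adl_Un[OF acc A(1) B(1)] adl_Int[OF acc A(1) B(1)] by blast+
    have fX: "finite X" and fY: "finite Y" using A(2) B(2) fin by simp_all
    have c: "card (X \<union> Y) + card (X \<inter> Y) = card X + card Y"
      using card_Un_Int[OF fX fY] by simp
    have s: "\<rho> (A \<union> B) + \<rho> (A \<inter> B) \<le> \<rho> A + \<rho> B" using um_sub[OF um A(1) B(1)] .
    have e1: "\<rho>' X = card X + \<rho> A - \<rho> E" using r'[OF A(1)] A(2) by simp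
    have e2: "\<rho>' Y = card Y + \<rho> B - \<rho> E" using r'[OF B(1)] B(2) by simp
    have e3: "\<rho>' (X \<union> Y) = card (X \<union> Y) + \<rho> (A \<inter> B) - \<rho> E" using r'[OF ID] U by simp
    have e4: "\<rho>' (X \<inter> Y) = card (X \<inter> Y) + \<rho> (A \<union> B) - \<rho> E" using r'[OF UD] I by simp
    have f1: "\<rho> E \<le> \<rho> A + card X" using rE[OF A(1)] A(2) by simp
    have f2: "\<rho> E \<le> \<rho> B + card Y" using rE[OF B(1)] B(2) by simp
    have f3: "\<rho> E \<le> \<rho> (A \<inter> B) + card (X \<union> Y)" using rE[OF ID] U by simp
    have f4: "\<rho> E \<le> \<rho> (A \<union> B) + card (X \<inter> Y)" using rE[OF UD] I by simp
    show ?thesis unfolding e1 e2 e3 e4 using f1 f2 f3 f4 c s by arith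
  qed
  have unit: "\<rho>' (X \<union> {e}) \<le> \<rho>' X + 1" if X: "X \<in> D'" and Xe: "X \<union> {e} \<in> D'" for X e
  proof (cases "e \<in> X")
    case True
    then have "X \<union> {e} = X" by blast
    then show ?thesis by simp
  next
    case False
    obtain A B where A: "A \<in> D" "X = E - A" and B: "B \<in> D" "X \<union> {e} = E - B" using D'E X Xe by blast
    have BA: "B \<subseteq> A" using A(2) B(2) sub[OF A(1)] sub[OF B(1)] by blast
    have "\<rho> B \<le> \<rho> A" using um_mono[OF um B(1) A(1) BA] .
    moreover have "card (X \<union> {e}) = card X + 1" using False A(2) fin by simp
    moreover have "\<rho>' X = card X + \<rho> A - \<rho> E" using r'[OF A(1)] A(2) by simp
    moreover have "\<rho>' (X \<union> {e}) = card (X \<union> {e}) + \<rho> B - \<rho> E" using r'[OF B(1)] B(2) by simp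
    moreover have "\<rho> E \<le> \<rho> A + card X" using rE[OF A(1)] A(2) by simp
    moreover have "\<rho> E \<le> \<rho> B + card (X \<union> {e})" using rE[OF B(1)] B(2) by simp
    ultimately show ?thesis by arith
  qed
  have "umatroid E D' \<rho>'" unfolding umatroid_def
  proof (intro conjI ballI allI impI)
    show "accessible_distrib_lattice E D'" by (rule acc')
    show "\<rho>' {} = 0" by (rule r0)
  next
    fix A B assume "A \<in> D'" "B \<in> D'" "A \<subseteq> B" then show "\<rho>' A \<le> \<rho>' B" by (rule mono)
  next
    fix A B assume "A \<in> D'" "B \<in> D'" then show "\<rho>' (A \<union> B) + \<rho>' (A \<inter> B) \<le> \<rho>' A + \<rho>' B" by (rule submod)
  next
    fix A e assume "A \<in> D'" "A \<union> {e} \<in> D'" then show "\<rho>' (A \<union> {e}) \<le> \<rho>' A + 1" by (rule unit)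
  qed
  then show ?thesis unfolding D'_def \<rho>'_def .
qed

definition flipv :: "'a set \<Rightarrow> ('a \<Rightarrow> real) \<Rightarrow> ('a \<Rightarrow> real)" where
  "flipv E x = (\<lambda>e. if e \<in> E then 1 - x e else 0)"

lemma flipv_flipv: "(\<And>g. g \<notin> E \<Longrightarrow> x g = 0) \<Longrightarrow> flipv E (flipv E x) = x"
  unfolding flipv_def by (auto simp: fun_eq_iff)

lemma flipv_affine:
  "flipv E (\<lambda>e. u * a e + (1 - u) * b e) = (\<lambda>e. u * flipv E a e + (1 - u) * flipv E b e)"
  unfolding flipv_def by (auto simp: fun_eq_iff algebra_simps)

lemma flipv_sum:
  assumes "finite E" "A \<subseteq> E"
  shows "sum (flipv E x) A = real (card A) - sum x A"
proof -
  have fA: "finite A" using assms finite_subset by blast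
  have "sum (flipv E x) A = sum (\<lambda>e. 1 - x e) A"
    using assms(2) unfolding flipv_def by (intro sum.cong) auto
  also have "\<dots> = real (card A) - sum x A" by (simp add: sum_subtractf)
  finally show ?thesis .
qed

lemma sum_split_E:
  assumes "finite E" "A \<subseteq> E"
  shows "sum (x :: _ \<Rightarrow> real) E = sum x A + sum x (E - A)"
  using sum.subset_diff[OF assms(2) assms(1), of x] by linarith

lemma vertex_transfer:
  assumes "\<And>x. x \<in> P \<Longrightarrow> \<phi> x \<in> Q" "\<And>x. x \<in> Q \<Longrightarrow> \<psi> x \<in> P"
    "\<And>x. x \<in> P \<Longrightarrow> \<psi> (\<phi> x) = x" "\<And>x. x \<in> Q \<Longrightarrow> \<phi> (\<psi> x) = x"
    "\<And>a b u. \<psi> (\<lambda>e. u * a e + (1 - u) * b e) = (\<lambda>e. u * \<psi> a e + (1 - u) * \<psi> b e)"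
    and vx: "vertex_of x P"
  shows "vertex_of (\<phi> x) Q"
proof (rule vertexI)
  have xP: "x \<in> P" using vertex_in[OF vx] .
  show "\<phi> x \<in> Q" using assms(1)[OF xP] .
  fix a b u assume a: "a \<in> Q" and b: "b \<in> Q" and u: "0 < u" "u < 1"
    and eq: "\<phi> x = (\<lambda>e. u * a e + (1 - u) * b e)"
  have "x = \<psi> (\<phi> x)" using assms(3)[OF xP] by simp
  also have "\<dots> = (\<lambda>e. u * \<psi> a e + (1 - u) * \<psi> b e)" unfolding eq by (rule assms(5))
  finally have "\<psi> a = \<psi> b" using vertex_ext[OF vx assms(2)[OF a] assms(2)[OF b] u] by blast
  then show "a = b" using assms(4)[OF a] assms(4)[OF b] by metis
qed

lemma flipv_bp:
  assumes um: "umatroid E D \<rho>" and fin: "finite E" and x: "x \<in> base_polyhedron E D \<rho>"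
  shows "flipv E x \<in> base_polyhedron E ((\<lambda>A. E - A) ` D) (\<lambda>X. card X + \<rho> (E - X) - \<rho> E)"
proof (rule bpI)
  show "\<And>g. g \<notin> E \<Longrightarrow> flipv E x g = 0" unfolding flipv_def by simp
next
  fix X assume "X \<in> (\<lambda>A. E - A) ` D"
  then obtain A where A: "A \<in> D" "X = E - A" by blast
  have sub: "A \<subseteq> E" using um_D_sub[OF um A(1)] .
  have AE: "E - (E - A) = A" using sub by blast
  have "sum (flipv E x) X = real (card (E - A)) - sum x (E - A)"
    using flipv_sum[OF fin, of "E - A" x] A(2) by simp
  moreover have "sum x E = sum x A + sum x (E - A)" using sum_split_E[OF fin sub] .
  moreover have "sum x E = real (\<rho> E)" using bp_E[OF x] .
  moreover have "sum x A \<le> real (\<rho> A)" using bp_le[OF x A(1)] .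
  moreover have "\<rho> E \<le> \<rho> A + card (E - A)" using um_rank_E[OF um fin A(1)] .
  moreover have "real (card X + \<rho> (E - X) - \<rho> E) = real (card (E - A)) + real (\<rho> A) - real (\<rho> E)"
    using A(2) AE um_rank_E[OF um fin A(1)] by (simp add: of_nat_diff)
  ultimately show "sum (flipv E x) X \<le> real (card X + \<rho> (E - X) - \<rho> E)" by linarith
next
  have "sum (flipv E x) E = real (card E) - sum x E" using flipv_sum[OF fin, of E x] by simp
  moreover have "sum x E = real (\<rho> E)" using bp_E[OF x] .
  moreover have "\<rho> E \<le> card E" using um_rank_E[OF um fin adl_empty[OF um_acc[OF um]]] um_r0[OF um] by simp
  ultimately show "sum (flipv E x) E = real (card E + \<rho> (E - E) - \<rho> E)"
    using um_r0[OF um] by (simp add: of_nat_diff)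
qed

lemma flipv_bp':
  assumes um: "umatroid E D \<rho>" and fin: "finite E"
    and y: "y \<in> base_polyhedron E ((\<lambda>A. E - A) ` D) (\<lambda>X. card X + \<rho> (E - X) - \<rho> E)"
  shows "flipv E y \<in> base_polyhedron E D \<rho>"
proof (rule bpI)
  show "\<And>g. g \<notin> E \<Longrightarrow> flipv E y g = 0" unfolding flipv_def by simp
next
  fix A assume A: "A \<in> D"
  have sub: "A \<subseteq> E" using um_D_sub[OF um A] .
  have AE: "E - (E - A) = A" using sub by blast
  have "E - A \<in> (\<lambda>A. E - A) ` D" using A by blast
  from bp_le[OF y this]
  have "sum y (E - A) \<le> real (card (E - A) + \<rho> A - \<rho> E)" unfolding AE .
  moreover have "real (card (E - A) + \<rho> A - \<rho> E) = real (card (E - A)) + real (\<rho> A) - real (\<rho> E)"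
    using um_rank_E[OF um fin A] by (simp add: of_nat_diff)
  moreover have "sum (flipv E y) A = real (card A) - sum y A" using flipv_sum[OF fin sub] .
  moreover have "sum y E = sum y A + sum y (E - A)" using sum_split_E[OF fin sub] .
  moreover have "sum y E = real (card E + \<rho> (E - E) - \<rho> E)" using bp_E[OF y] .
  moreover have "real (card E + \<rho> (E - E) - \<rho> E) = real (card E) - real (\<rho> E)"
    using um_rank_E[OF um fin adl_empty[OF um_acc[OF um]]] um_r0[OF um] by (simp add: of_nat_diff)
  moreover have "card E = card A + card (E - A)" using card_Diff_subset[OF finite_subset[OF sub fin] sub] card_mono[OF fin sub] by linarith
  then have "real (card E) = real (card A) + real (card (E - A))" by (metis of_nat_add)
  ultimately show "sum (flipv E y) A \<le> real (\<rho> A)" by linarith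
next
  have "sum (flipv E y) E = real (card E) - sum y E" using flipv_sum[OF fin, of E y] by simp
  moreover have "sum y E = real (card E + \<rho> (E - E) - \<rho> E)" using bp_E[OF y] .
  moreover have "real (card E + \<rho> (E - E) - \<rho> E) = real (card E) - real (\<rho> E)"
    using um_rank_E[OF um fin adl_empty[OF um_acc[OF um]]] um_r0[OF um] by (simp add: of_nat_diff)
  ultimately show "sum (flipv E y) E = real (\<rho> E)" by simp
qed

theorem proposition6p2:
  fixes E :: "'a set" and P :: "('a \<times> 'a) set" and \<B> :: "'a set set"
  assumes "finite E"
    and "partial_order_on E P"
    and "\<exists>D \<rho>. umatroid E D \<rho> \<and> char_poset E D = P \<and> umatroid_bases E D \<rho> = \<B>"
  shows "\<exists>D' \<rho>'. umatroid E D' \<rho>' \<and> char_poset E D' = P\<inverse> \<and>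
           umatroid_bases E D' \<rho>' = {E - B | B. B \<in> \<B>}"
proof -
  note fin = assms(1)
  obtain D \<rho> where um: "umatroid E D \<rho>" and cp: "char_poset E D = P" and bs: "umatroid_bases E D \<rho> = \<B>"
    using assms(3) by blast
  define D' where "D' = (\<lambda>A. E - A) ` D"
  define \<rho>' where "\<rho>' = (\<lambda>X. card X + \<rho> (E - X) - \<rho> E)"
  have um': "umatroid E D' \<rho>'" unfolding D'_def \<rho>'_def using dual_umatroid[OF um fin] .
  have cp': "char_poset E D' = P\<inverse>"
  proof -
    have "(i, j) \<in> char_poset E D' \<longleftrightarrow> (j, i) \<in> char_poset E D" for i j
    proof -
      have "(\<forall>X\<in>D'. j \<in> X \<longrightarrow> i \<in> X) \<longleftrightarrow> (\<forall>A\<in>D. j \<in> E - A \<longrightarrow> i \<in> E - A)"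
        unfolding D'_def by blast
      then show ?thesis unfolding char_poset_def by blast
    qed
    then show ?thesis unfolding cp[symmetric] by auto
  qed
  define PP where "PP = base_polyhedron E D \<rho>"
  define QQ where "QQ = base_polyhedron E D' \<rho>'"
  have t1: "\<And>x. x \<in> PP \<Longrightarrow> flipv E x \<in> QQ"
    unfolding PP_def QQ_def D'_def \<rho>'_def using flipv_bp[OF um fin] by blast
  have t2: "\<And>x. x \<in> QQ \<Longrightarrow> flipv E x \<in> PP"
    unfolding PP_def QQ_def D'_def \<rho>'_def using flipv_bp'[OF um fin] by blast
  have t3: "\<And>x. x \<in> PP \<Longrightarrow> flipv E (flipv E x) = x"
    unfolding PP_def by (rule flipv_flipv, erule bp_out)
  have t4: "\<And>x. x \<in> QQ \<Longrightarrow> flipv E (flipv E x) = x"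
    unfolding QQ_def by (rule flipv_flipv, erule bp_out)
  have vPQ: "\<And>x. vertex_of x PP \<Longrightarrow> vertex_of (flipv E x) QQ"
    by (rule vertex_transfer[OF t1 t2 t3 t4 flipv_affine])
  have vQP: "\<And>x. vertex_of x QQ \<Longrightarrow> vertex_of (flipv E x) PP"
    by (rule vertex_transfer[OF t2 t1 t4 t3 flipv_affine])
  have supp: "{e \<in> E. flipv E x e \<noteq> 0} = E - {e \<in> E. x e \<noteq> 0}" if vx: "vertex_of x PP" for x
  proof -
    have "\<And>e. e \<in> E \<Longrightarrow> x e = 0 \<or> x e = 1" using um_vertex_01[OF um fin vx[unfolded PP_def]] .
    then show ?thesis unfolding flipv_def by auto
  qed
  have "umatroid_bases E D' \<rho>' = {E - B | B. B \<in> \<B>}"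
  proof
    show "umatroid_bases E D' \<rho>' \<subseteq> {E - B | B. B \<in> \<B>}"
    proof
      fix S assume "S \<in> umatroid_bases E D' \<rho>'"
      then obtain y where vy: "vertex_of y QQ" and S: "S = {e \<in> E. y e \<noteq> 0}"
        unfolding umatroid_bases_def QQ_def by blast
      define x where "x = flipv E y"
      have vx: "vertex_of x PP" unfolding x_def using vQP[OF vy] .
      have yx: "y = flipv E x" unfolding x_def using t4[OF vertex_in[OF vy]] by simp
      have "{e \<in> E. x e \<noteq> 0} \<in> \<B>" unfolding bs[symmetric] umatroid_bases_def
        using vx unfolding PP_def by blast
      moreover have "S = E - {e \<in> E. x e \<noteq> 0}" unfolding S yx using supp[OF vx] .
      ultimately show "S \<in> {E - B | B. B \<in> \<B>}" by blast
    qed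
  next
    show "{E - B | B. B \<in> \<B>} \<subseteq> umatroid_bases E D' \<rho>'"
    proof
      fix S assume "S \<in> {E - B | B. B \<in> \<B>}"
      then obtain B where B: "B \<in> \<B>" and S: "S = E - B" by blast
      then obtain x where vx: "vertex_of x PP" and Bx: "B = {e \<in> E. x e \<noteq> 0}"
        unfolding bs[symmetric] umatroid_bases_def PP_def by blast
      have "S = {e \<in> E. flipv E x e \<noteq> 0}" unfolding S Bx using supp[OF vx] by simp
      moreover have "vertex_of (flipv E x) QQ" using vPQ[OF vx] .
      ultimately show "S \<in> umatroid_bases E D' \<rho>'" unfolding umatroid_bases_def QQ_def by blast
    qed
  qed
  then show ?thesis using um' cp' by blast
qed

end
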